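(* Let $q$ be a prime power and $e,m$ positive integers with $q=em+1$. Let $a_0=1,a_1,\dots,a_{e-1}\in\mathbb{F}_q^*$ with $a_i\in D_i^e$ for each $i$, and let $M$ be the $e\times e$ matrix with entries $M_{ij}=a_{i-1}^{-1}a_{j-1}$ for $1\le i,j\le e$. Then the $e\times e$ block matrix whose $(i,j)$ block is $C_{M_{ij}}$ is the adjacency matrix of a directed strongly regular graph with parameters $(e(em+1),\ em,\ m,\ m-1,\ m)$.
   Context: Fix a primitive element $\gamma$ of $\mathbb{F}_q$; $D_i^e=\gamma^i\langle\gamma^e\rangle$, $i=0,\dots,e-1$, are the cyclotomic classes of order $e$. For $\sigma\in\mathbb{F}_q^*$, $C_\sigma$ is the $q\times q$ $0$-$1$ matrix with rows and columns indexed by $\mathbb{F}_q$ and $(C_\sigma)_{x,y}=1$ iff $x\in\sigma y+D_0^e$. A directed strongly regular graph with parameters $(v,k,t,\lambda,\mu)$ is a digraph (no loops, no multiple arcs) on $v$ vertices whose adjacency matrix $A$ satisfies $A^2=tI+\lambda A+\mu(J-I-A)$ and $AJ=JA=kJ$. *)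

theory Defs
  imports Main
begin

definition primitive_element :: "'a::{finite,field} \<Rightarrow> bool" where
  "primitive_element \<gamma> \<longleftrightarrow> \<gamma> \<noteq> 0 \<and> (\<forall>x. x \<noteq> 0 \<longrightarrow> (\<exists>k::nat. x = \<gamma> ^ k))"

definition cyclo_class :: "'a::{finite,field} \<Rightarrow> nat \<Rightarrow> nat \<Rightarrow> 'a set" where
  "cyclo_class \<gamma> e i = {\<gamma> ^ i * (\<gamma> ^ e) ^ k | k. True}"

definition C_mat :: "'a::{finite,field} \<Rightarrow> nat \<Rightarrow> 'a \<Rightarrow> 'a \<Rightarrow> 'a \<Rightarrow> int" where
  "C_mat \<gamma> e \<sigma> x y = (if x \<in> {\<sigma> * y + d | d. d \<in> cyclo_class \<gamma> e 0} then 1 else 0)"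

text \<open>The e x e block matrix with (i,j) block C_{M_ij}, M_ij = a_i^{-1} a_j (0-indexed),
  indexed by pairs (block index, field element).\<close>
definition block_adj :: "'a::{finite,field} \<Rightarrow> nat \<Rightarrow> (nat \<Rightarrow> 'a) \<Rightarrow> nat \<times> 'a \<Rightarrow> nat \<times> 'a \<Rightarrow> int" where
  "block_adj \<gamma> e a u w = C_mat \<gamma> e (inverse (a (fst u)) * a (fst w)) (snd u) (snd w)"

definition is_dsrg :: "'v set \<Rightarrow> ('v \<Rightarrow> 'v \<Rightarrow> int) \<Rightarrow> nat \<Rightarrow> nat \<Rightarrow> nat \<Rightarrow> nat \<Rightarrow> nat \<Rightarrow> bool" where
  "is_dsrg V A v k t lam mu \<longleftrightarrow>
     finite V \<and> card V = v \<and>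
     (\<forall>x\<in>V. \<forall>y\<in>V. A x y = 0 \<or> A x y = 1) \<and>
     (\<forall>x\<in>V. A x x = 0) \<and>
     (\<forall>x\<in>V. \<forall>y\<in>V.
        (\<Sum>z\<in>V. A x z * A z y) =
          int t * (if x = y then 1 else 0) + int lam * A x y
          + int mu * (1 - (if x = y then 1 else 0) - A x y)) \<and>
     (\<forall>x\<in>V. (\<Sum>y\<in>V. A x y) = int k) \<and>
     (\<forall>y\<in>V. (\<Sum>x\<in>V. A x y) = int k)"

end

theory Submission
  imports Defs
begin

lemma fermat_ff:
  fixes x :: "'a::{finite,field}" assumes "x \<noteq> 0"
  shows "x ^ (card (UNIV::'a set) - 1) = 1"
proof -
  have c: "card (UNIV - {0::'a}) = card (UNIV::'a set) - 1" by (simp add: card_Diff_singleton)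
  have "(\<Prod>y\<in>UNIV-{0}. x * y) = x ^ (card (UNIV::'a set) - 1) * (\<Prod>y\<in>UNIV-{0::'a}. y)"
    by (simp add: prod.distrib c)
  also have "(\<Prod>y\<in>UNIV-{0}. x * y) = (\<Prod>y\<in>UNIV-{0::'a}. y)"
    by (rule prod.reindex_bij_witness[of _ "\<lambda>y. y / x" "\<lambda>y. x * y"]) (use assms in auto)
  finally have "(\<Prod>y\<in>UNIV-{0::'a}. y) * 1 = (\<Prod>y\<in>UNIV-{0::'a}. y) * x ^ (card (UNIV::'a set) - 1)"
    by (simp add: mult.commute)
  moreover have "(\<Prod>y\<in>UNIV-{0::'a}. y) \<noteq> 0" by simp
  ultimately show ?thesis by (metis mult_left_cancel)
qed

lemma period:
  fixes \<gamma> :: "'a::{finite,field}"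
  assumes "primitive_element \<gamma>" "\<gamma> ^ p = 1" "p > 0"
  shows "card (UNIV::'a set) - 1 \<le> p"
proof -
  have "UNIV - {0} \<subseteq> (\<lambda>n. \<gamma> ^ n) ` {..<p}"
  proof
    fix x :: 'a assume "x \<in> UNIV - {0}"
    then obtain k where k: "x = \<gamma> ^ k" using assms(1) unfolding primitive_element_def by auto
    have "\<gamma> ^ k = (\<gamma> ^ p) ^ (k div p) * \<gamma> ^ (k mod p)"
      by (metis div_mult_mod_eq power_add power_mult mult.commute)
    hence "x = \<gamma> ^ (k mod p)" using k assms(2) by simp
    thus "x \<in> (\<lambda>n. \<gamma> ^ n) ` {..<p}" using assms(3) by auto
  qed
  hence "card (UNIV - {0::'a}) \<le> card ((\<lambda>n. \<gamma> ^ n) ` {..<p})" by (intro card_mono) auto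
  also have "\<dots> \<le> p" using card_image_le[of "{..<p}"] by simp
  finally show ?thesis by (simp add: card_Diff_singleton)
qed

lemma pow_eq:
  fixes \<gamma> :: "'a::{finite,field}"
  assumes "primitive_element \<gamma>"
  shows "\<gamma> ^ a = \<gamma> ^ b \<longleftrightarrow> a mod (card (UNIV::'a set) - 1) = b mod (card (UNIV::'a set) - 1)"
proof -
  let ?N = "card (UNIV::'a set) - 1"
  have g0: "\<gamma> \<noteq> 0" using assms by (simp add: primitive_element_def)
  have "card {0::'a, 1} \<le> card (UNIV::'a set)" by (rule card_mono) auto
  hence N: "?N > 0" by simp
  have red: "\<gamma> ^ n = \<gamma> ^ (n mod ?N)" for n
  proof -
    have "\<gamma> ^ n = (\<gamma> ^ ?N) ^ (n div ?N) * \<gamma> ^ (n mod ?N)"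
      by (metis div_mult_mod_eq power_add power_mult mult.commute)
    thus ?thesis using fermat_ff[OF g0] by simp
  qed
  have lt: "False" if "\<gamma> ^ a' = \<gamma> ^ b'" "a' < b'" "b' < ?N" for a' b'
  proof -
    have "\<gamma> ^ b' = \<gamma> ^ a' * \<gamma> ^ (b' - a')" using that(2) by (simp flip: power_add)
    hence "\<gamma> ^ (b' - a') = 1" using that(1) g0 by simp
    from period[OF assms this] that show False by simp
  qed
  have inj: "a' = b'" if "\<gamma> ^ a' = \<gamma> ^ b'" "a' < ?N" "b' < ?N" for a' b'
    using lt[of a' b'] lt[of b' a'] that by (metis linorder_neqE_nat)
  show ?thesis
  proof
    assume "\<gamma> ^ a = \<gamma> ^ b"
    hence "\<gamma> ^ (a mod ?N) = \<gamma> ^ (b mod ?N)" using red by metis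
    thus "a mod ?N = b mod ?N" using inj N by simp
  next
    assume "a mod ?N = b mod ?N"
    thus "\<gamma> ^ a = \<gamma> ^ b" using red by metis
  qed
qed

lemma aff:
  fixes g :: "'a::field \<Rightarrow> int"
  assumes "\<sigma> \<noteq> 0"
  shows "(\<Sum>z\<in>(UNIV::'a set). g (\<sigma> * z + c)) = sum g UNIV"
  by (rule sum.reindex_bij_witness[of _ "\<lambda>y. (y - c) / \<sigma>" "\<lambda>z. \<sigma> * z + c"]) (use assms in auto)

lemma mem_shift:
  "x \<in> {\<sigma> * y + d | d. d \<in> D} \<longleftrightarrow> x - \<sigma> * y \<in> (D :: 'a::field set)"
  by (auto simp: algebra_simps) (metis add_diff_cancel_left' diff_add_cancel)

lemma sum_prod_split:
  "sum f (A \<times> B) = (\<Sum>x\<in>A. \<Sum>y\<in>B. f (x,y))"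
  by (simp add: sum.cartesian_product)

theorem mainTheorem11:
  fixes \<gamma> :: "'a::{finite,field}" and e m :: nat and a :: "nat \<Rightarrow> 'a"
  assumes "primitive_element \<gamma>"
    and "e > 0" and "m > 0"
    and "card (UNIV :: 'a set) = e * m + 1"
    and "a 0 = 1"
    and "\<forall>i<e. a i \<in> cyclo_class \<gamma> e i"
  shows "is_dsrg ({0..<e} \<times> (UNIV :: 'a set)) (block_adj \<gamma> e a)
           (e * (e * m + 1)) (e * m) m (m - 1) m"
proof -
  define D where "D = cyclo_class \<gamma> e 0"
  define V where "V = {0..<e} \<times> (UNIV :: 'a set)"
  define A where "A = block_adj \<gamma> e a"
  have g0: "\<gamma> \<noteq> 0" using assms(1) by (simp add: primitive_element_def)
  have memD: "d \<in> D \<longleftrightarrow> (\<exists>k. d = \<gamma> ^ (e * k))" for d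
    by (auto simp: D_def cyclo_class_def power_mult)
  have pe: "\<gamma> ^ x = \<gamma> ^ y \<longleftrightarrow> x mod (e * m) = y mod (e * m)" for x y
    using pow_eq[OF assms(1), of x y] assms(4) by simp
  have D0: "0 \<notin> D" using memD g0 by auto
  have Dimg: "D = (\<lambda>k. \<gamma> ^ (e * k)) ` {..<m}"
  proof (rule set_eqI, rule iffI)
    fix d assume "d \<in> D"
    then obtain k where k: "d = \<gamma> ^ (e * k)" using memD by auto
    have "(e * k) mod (e * m) = (e * (k mod m)) mod (e * m)"
      using assms(3) by (simp add: mod_mult_mult1)
    hence "d = \<gamma> ^ (e * (k mod m))" using k pe by simp
    thus "d \<in> (\<lambda>k. \<gamma> ^ (e * k)) ` {..<m}" using assms(3) by auto
  qed (auto simp: memD)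
  have injD: "inj_on (\<lambda>k. \<gamma> ^ (e * k)) {..<m}"
  proof (rule inj_onI)
    fix k l assume "k \<in> {..<m}" "l \<in> {..<m}" "\<gamma> ^ (e * k) = \<gamma> ^ (e * l)"
    hence "(e * k) mod (e * m) = (e * l) mod (e * m)" "k < m" "l < m" using pe by auto
    thus "k = l" using assms(2) by (simp add: mod_mult_mult1)
  qed
  have cardD: "card D = m" using Dimg injD by (simp add: card_image)
  have aexp: "\<exists>s. a k = \<gamma> ^ (k + e * s)" if "k < e" for k
  proof -
    from assms(6) that have "a k \<in> cyclo_class \<gamma> e k" by auto
    then obtain s where "a k = \<gamma> ^ k * (\<gamma> ^ e) ^ s" by (auto simp: cyclo_class_def)
    thus ?thesis by (auto simp: power_add power_mult)
  qed
  have anz: "a k \<noteq> 0" if "k < e" for k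
    using aexp[OF that] g0 by auto
  have coset: "inverse (a k) * \<gamma> ^ n \<in> D \<longleftrightarrow> k = n mod e" if k: "k < e" for k n
  proof -
    obtain s where s: "a k = \<gamma> ^ (k + e * s)" using aexp[OF k] by auto
    have "inverse (a k) * \<gamma> ^ n \<in> D \<longleftrightarrow> (\<exists>l. inverse (a k) * \<gamma> ^ n = \<gamma> ^ (e * l))"
      using memD by simp
    also have "\<dots> \<longleftrightarrow> (\<exists>l. \<gamma> ^ n = \<gamma> ^ (k + e * s + e * l))"
      using anz[OF k] s by (auto simp: field_simps power_add)
    also have "\<dots> \<longleftrightarrow> (\<exists>l. n mod (e * m) = (k + e * s + e * l) mod (e * m))"
      using pe by simp
    also have "\<dots> \<longleftrightarrow> k = n mod e"
    proof
      assume "\<exists>l. n mod (e * m) = (k + e * s + e * l) mod (e * m)"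
      then obtain l where l: "n mod (e * m) = (k + e * s + e * l) mod (e * m)" by auto
      have "n mod e = n mod (e * m) mod e" by (simp add: mod_mod_cancel)
      also have "\<dots> = (k + e * s + e * l) mod e" using l by (simp add: mod_mod_cancel)
      also have "\<dots> = k" using k by simp
      finally show "k = n mod e" by simp
    next
      assume kn: "k = n mod e"
      define l where "l = n div e + (m - 1) * s"
      have "s + l = n div e + m * s" using assms(3) unfolding l_def
        by (cases m) auto
      hence "k + e * s + e * l = n + e * m * s" using kn
        by (metis add.assoc distrib_left mod_div_mult_eq mult.assoc mult.commute)
      hence "n mod (e * m) = (k + e * s + e * l) mod (e * m)" by simp
      thus "\<exists>l. n mod (e * m) = (k + e * s + e * l) mod (e * m)" by blast
    qed
    finally show ?thesis .
  qed
  have partition: "(\<Sum>k\<in>{0..<e}. if inverse (a k) * t \<in> D then 1 else 0 :: int) = 1"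
    if tnz: "t \<noteq> 0" for t
  proof -
    obtain n where n: "t = \<gamma> ^ n" using assms(1) tnz unfolding primitive_element_def by auto
    have "(\<Sum>k\<in>{0..<e}. if inverse (a k) * t \<in> D then 1 else 0 :: int)
        = (\<Sum>k\<in>{0..<e}. if k = n mod e then 1 else 0)"
      using coset n by (intro sum.cong) auto
    also have "\<dots> = 1" using assms(2) by simp
    finally show ?thesis .
  qed
  have adj: "A (i,x) (j,y) = (if x - inverse (a i) * a j * y \<in> D then 1 else 0)" for i x j y
    unfolding A_def block_adj_def C_mat_def mem_shift D_def by simp
  have cnt: "(\<Sum>y\<in>UNIV. if x - \<sigma> * y \<in> D then 1 else 0 :: int) = int m" if "\<sigma> \<noteq> 0" for \<sigma> x
  proof -
    have "(\<Sum>y\<in>UNIV. if x - \<sigma> * y \<in> D then 1 else 0 :: int)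
        = (\<Sum>y\<in>UNIV. (\<lambda>z. if z \<in> D then 1 else 0 :: int) ((- \<sigma>) * y + x))" by simp
    also have "\<dots> = (\<Sum>z\<in>UNIV. if z \<in> D then 1 else 0 :: int)"
      by (rule aff) (use that in simp)
    also have "\<dots> = int m" using cardD by (simp add: sum.If_cases)
    finally show ?thesis .
  qed
  have cnt2: "(\<Sum>x\<in>UNIV. if x - c \<in> D then 1 else 0 :: int) = int m" for c
  proof -
    have "(\<Sum>x\<in>UNIV. if x - c \<in> D then 1 else 0 :: int)
        = (\<Sum>y\<in>UNIV. (\<lambda>z. if z \<in> D then 1 else 0 :: int) (1 * y + (- c)))" by simp
    also have "\<dots> = (\<Sum>z\<in>UNIV. if z \<in> D then 1 else 0 :: int)"
      by (rule aff) simp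
    also have "\<dots> = int m" using cardD by (simp add: sum.If_cases)
    finally show ?thesis .
  qed
  show ?thesis
    unfolding is_dsrg_def
  proof (intro conjI ballI)
    show "finite ({0..<e} \<times> (UNIV :: 'a set))" by simp
    show "card ({0..<e} \<times> (UNIV :: 'a set)) = e * (e * m + 1)"
      using assms(4) by (simp add: card_cartesian_product)
  next
    fix u w assume "u \<in> {0..<e} \<times> (UNIV :: 'a set)" "w \<in> {0..<e} \<times> (UNIV :: 'a set)"
    then obtain i x j y where "u = (i,x)" "w = (j,y)" by auto
    thus "block_adj \<gamma> e a u w = 0 \<or> block_adj \<gamma> e a u w = 1"
      using adj[of i x j y] unfolding A_def by auto
  next
    fix u assume u: "u \<in> {0..<e} \<times> (UNIV :: 'a set)"
    then obtain i x where ix: "u = (i,x)" "i < e" by auto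
    show "block_adj \<gamma> e a u u = 0"
      using adj[of i x i x] ix anz[OF ix(2)] D0 unfolding A_def by simp
  next
    fix u w assume u: "u \<in> {0..<e} \<times> (UNIV :: 'a set)" and w: "w \<in> {0..<e} \<times> (UNIV :: 'a set)"
    obtain i x where ix: "u = (i,x)" "i < e" using u by auto
    obtain j y where jy: "w = (j,y)" "j < e" using w by auto
    define P where "P = (\<lambda>w. if x - inverse (a i) * w \<in> D then 1 else 0 :: int)"
    have "(\<Sum>z\<in>{0..<e} \<times> (UNIV :: 'a set). A (i,x) z * A z (j,y))
        = (\<Sum>k\<in>{0..<e}. \<Sum>z\<in>UNIV. A (i,x) (k,z) * A (k,z) (j,y))"
      by (rule sum_prod_split)
    also have "\<dots> = (\<Sum>k\<in>{0..<e}. \<Sum>w\<in>UNIV. P w *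
                  (if inverse (a k) * (w - a j * y) \<in> D then 1 else 0))"
    proof (rule sum.cong[OF refl])
      fix k assume k: "k \<in> {0..<e}"
      have akz: "a k \<noteq> 0" using anz k by auto
      have "(\<Sum>z\<in>UNIV. A (i,x) (k,z) * A (k,z) (j,y))
         = (\<Sum>w\<in>UNIV. (\<lambda>z. A (i,x) (k,z) * A (k,z) (j,y)) (inverse (a k) * w + 0))"
        by (rule aff[symmetric]) (use akz in simp)
      also have "\<dots> = (\<Sum>w\<in>UNIV. P w * (if inverse (a k) * (w - a j * y) \<in> D then 1 else 0))"
      proof (rule sum.cong[OF refl])
        fix w
        have e1: "inverse (a i) * a k * (inverse (a k) * w) = inverse (a i) * w"
          using akz by (simp add: field_simps)
        have e2: "inverse (a k) * w - inverse (a k) * a j * y = inverse (a k) * (w - a j * y)"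
          by (simp add: algebra_simps)
        show "(\<lambda>z. A (i,x) (k,z) * A (k,z) (j,y)) (inverse (a k) * w + 0)
            = P w * (if inverse (a k) * (w - a j * y) \<in> D then 1 else 0)"
          by (simp only: adj e1 e2 P_def add_0_right)
      qed
      finally show "(\<Sum>z\<in>UNIV. A (i,x) (k,z) * A (k,z) (j,y))
         = (\<Sum>w\<in>UNIV. P w * (if inverse (a k) * (w - a j * y) \<in> D then 1 else 0))" .
    qed
    also have "\<dots> = (\<Sum>w\<in>UNIV. P w * (\<Sum>k\<in>{0..<e}. if inverse (a k) * (w - a j * y) \<in> D then 1 else 0))"
      by (subst sum.swap) (simp add: sum_distrib_left)
    also have "\<dots> = (\<Sum>w\<in>UNIV. P w - (if w = a j * y then P (a j * y) else 0))"
    proof (rule sum.cong[OF refl])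
      fix w
      show "P w * (\<Sum>k\<in>{0..<e}. if inverse (a k) * (w - a j * y) \<in> D then 1 else 0)
          = P w - (if w = a j * y then P (a j * y) else 0)"
      proof (cases "w = a j * y")
        case True thus ?thesis using D0 by simp
      next
        case False
        hence "w - a j * y \<noteq> 0" by simp
        thus ?thesis using partition False by simp
      qed
    qed
    also have "\<dots> = int m - P (a j * y)"
    proof -
      have "sum P UNIV = int m" using cnt[of "inverse (a i)" x] anz[OF ix(2)] unfolding P_def by simp
      thus ?thesis by (simp add: sum_subtractf)
    qed
    also have "P (a j * y) = A (i,x) (j,y)" unfolding P_def adj by (simp add: mult.assoc)
    finally have sq: "(\<Sum>z\<in>{0..<e} \<times> (UNIV :: 'a set). A (i,x) z * A z (j,y)) = int m - A (i,x) (j,y)" .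
    have diag: "A (i,x) (i,x) = 0" using adj[of i x i x] anz[OF ix(2)] D0 by simp
    have b01: "A (i,x) (j,y) = 0 \<or> A (i,x) (j,y) = 1" using adj[of i x j y] by auto
    have mm: "int (m - 1) = int m - 1" using assms(3) by simp
    show "(\<Sum>z\<in>{0..<e} \<times> (UNIV :: 'a set). block_adj \<gamma> e a u z * block_adj \<gamma> e a z w) =
          int m * (if u = w then 1 else 0) + int (m - 1) * block_adj \<gamma> e a u w +
          int m * (1 - (if u = w then 1 else 0) - block_adj \<gamma> e a u w)"
      using sq diag b01 mm ix jy unfolding A_def[symmetric]
      by (cases "u = w") (auto simp: algebra_simps)
  next
    fix u assume u: "u \<in> {0..<e} \<times> (UNIV :: 'a set)"
    obtain i x where ix: "u = (i,x)" "i < e" using u by auto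
    have "(\<Sum>w\<in>{0..<e} \<times> (UNIV :: 'a set). A (i,x) w) = (\<Sum>j\<in>{0..<e}. \<Sum>y\<in>UNIV. A (i,x) (j,y))"
      by (rule sum_prod_split)
    also have "\<dots> = (\<Sum>j\<in>{0..<e}. int m)"
    proof (rule sum.cong[OF refl])
      fix j assume "j \<in> {0..<e}"
      hence "inverse (a i) * a j \<noteq> 0" using anz ix by auto
      thus "(\<Sum>y\<in>UNIV. A (i,x) (j,y)) = int m" using cnt[of "inverse (a i) * a j" x]
        by (simp only: adj) simp
    qed
    finally show "(\<Sum>w\<in>{0..<e} \<times> (UNIV :: 'a set). block_adj \<gamma> e a u w) = int (e * m)"
      using ix unfolding A_def by simp
  next
    fix w assume w: "w \<in> {0..<e} \<times> (UNIV :: 'a set)"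
    obtain j y where jy: "w = (j,y)" "j < e" using w by auto
    have "(\<Sum>u\<in>{0..<e} \<times> (UNIV :: 'a set). A u (j,y)) = (\<Sum>i\<in>{0..<e}. \<Sum>x\<in>UNIV. A (i,x) (j,y))"
      by (rule sum_prod_split)
    also have "\<dots> = (\<Sum>i\<in>{0..<e}. int m)"
      by (rule sum.cong[OF refl]) (simp add: adj cnt2)
    finally show "(\<Sum>u\<in>{0..<e} \<times> (UNIV :: 'a set). block_adj \<gamma> e a u w) = int (e * m)"
      using jy unfolding A_def by simp
  qed
qed

end
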